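(* Let $X_1,X_2,\dots$ be i.i.d. exponential random variables with mean $1$ and $\lambda_1,\lambda_2,\dots$ positive reals. Then for all $t\ge0$ and $k\ge1$, $$\frac{t^k}{\prod_{i=1}^k(k+\lambda_it)}\prod_{i=1}^k\lambda_i\le\mathbb{P}\Big(\sum_{i=1}^kX_i/\lambda_i\le t\Big)\le\Big(\frac{et}{k}\Big)^k\prod_{i=1}^k\lambda_i.$$ Moreover, if $\lambda_i\ge\lambda>0$ for all $i$ and $\Lambda:=\sum_{i=1}^k1/\lambda_i$, then for all $t\ge\Lambda$, $$\mathbb{P}\Big(\sum_{i=1}^kX_i/\lambda_i\ge t\Big)\le\exp\Big(-\frac{\lambda(t-\Lambda)^2}{2t}\Big).$$ *)

theory Defs
  imports "HOL-Probability.Probability"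
begin

end

theory Submission
  imports Defs
begin


lemma ln_bound:
  fixes x :: real assumes "0 \<le> x" "x < 1"
  shows "- ln (1 - x) \<le> x + x^2 / (2 * (1 - x))"
proof -
  define f where "f y = y + y^2 / (2 * (1 - y)) + ln (1 - y)" for y :: real
  have "f 0 \<le> f x"
  proof (rule DERIV_nonneg_imp_increasing_open[of 0 x])
    fix y assume y: "0 < y" "y < x"
    then have y1: "y < 1" using assms by simp
    have "(f has_real_derivative (1 + (2 * y * (2 * (1 - y)) + y^2 * 2) / (2 * (1 - y))^2 - 1 / (1 - y))) (at y)"
      unfolding f_def using y1
      by (auto intro!: derivative_eq_intros simp: power2_eq_square)
    moreover have "(1 + (2 * y * (2 * (1 - y)) + y^2 * 2) / (2 * (1 - y))^2 - 1 / (1 - y)) = y^2 / (2 * (1 - y)^2)"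
    proof -
      have nz: "1 - y \<noteq> 0" "2 * (1 - y) \<noteq> 0" using y1 by auto
      show ?thesis using nz by (simp add: divide_simps power2_eq_square) (simp add: algebra_simps)
    qed
    ultimately show "\<exists>d. (f has_real_derivative d) (at y) \<and> 0 \<le> d" by auto
  next
    show "continuous_on {0..x} f" unfolding f_def using assms
      by (auto intro!: continuous_intros)
  qed (use assms in auto)
  then show ?thesis by (simp add: f_def)
qed

lemma inv_bound:
  fixes x :: real assumes "0 \<le> x" "x < 1"
  shows "1 / (1 - x) \<le> exp (x + x^2 / (2 * (1 - x)))"
proof -
  have "1 / (1 - x) = exp (- ln (1 - x))" using assms by (simp add: exp_minus inverse_eq_divide)
  also have "\<dots> \<le> exp (x + x^2 / (2 * (1 - x)))" using ln_bound[OF assms] by simp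
  finally show ?thesis .
qed

lemma low_bound:
  fixes a :: real assumes "0 \<le> a"
  shows "a / (1 + a) \<le> 1 - exp (- a)"
proof -
  have "1 + a \<le> exp a" by (rule exp_ge_add_one_self)
  then have "exp (-a) \<le> 1 / (1 + a)" using assms by (simp add: exp_minus field_simps)
  moreover have "1 - 1 / (1 + a) = a / (1 + a)" using assms by (simp add: field_simps)
  ultimately show ?thesis by linarith
qed



lemma (in prob_space) prod_expect:
  fixes g :: "nat \<Rightarrow> real \<Rightarrow> real"
  assumes indep: "indep_vars (\<lambda>_. borel) X UNIV" and fin: "finite I"
    and g: "\<And>i. g i \<in> borel_measurable borel"
    and int: "\<And>i. i \<in> I \<Longrightarrow> integrable M (\<lambda>\<omega>. g i (X i \<omega>))"
  shows "integrable M (\<lambda>\<omega>. \<Prod>i\<in>I. g i (X i \<omega>))"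
    and "expectation (\<lambda>\<omega>. \<Prod>i\<in>I. g i (X i \<omega>)) = (\<Prod>i\<in>I. expectation (\<lambda>\<omega>. g i (X i \<omega>)))"
proof -
  have "indep_vars (\<lambda>_. borel) (\<lambda>i \<omega>. g i (X i \<omega>)) I"
    by (rule indep_vars_compose2[OF indep_vars_subset[OF indep]]) (auto intro: g)
  then show "integrable M (\<lambda>\<omega>. \<Prod>i\<in>I. g i (X i \<omega>))"
    and "expectation (\<lambda>\<omega>. \<Prod>i\<in>I. g i (X i \<omega>)) = (\<Prod>i\<in>I. expectation (\<lambda>\<omega>. g i (X i \<omega>)))"
    using indep_vars_integrable[OF fin _ int] indep_vars_lebesgue_integral[OF fin _ int] by auto
qed

lemma (in prob_space) mgf_exp:
  assumes D: "distributed M lborel X (exponential_density 1)" and u: "u < 1"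
  shows "has_bochner_integral M (\<lambda>\<omega>. exp (u * X \<omega>)) (1 / (1 - u))"
proof (rule has_bochner_integral_nn_integral)
  show "(\<lambda>\<omega>. exp (u * X \<omega>)) \<in> borel_measurable M"
  proof -
    have [measurable]: "X \<in> borel_measurable M" using distributed_measurable[OF D] by simp
    show ?thesis by measurable
  qed
  show "AE x in M. 0 \<le> exp (u * X x)" by simp
  show "0 \<le> 1 / (1 - u)" using u by simp
  have "(\<integral>\<^sup>+ \<omega>. ennreal (exp (u * X \<omega>)) \<partial>M) = (\<integral>\<^sup>+x. ennreal (exponential_density 1 x) * ennreal (exp (u * x)) \<partial>lborel)"
    by (subst distributed_nn_integral[OF D, symmetric]) auto
  also have "\<dots> = (\<integral>\<^sup>+x. ennreal (1 / (1 - u)) * ennreal (erlang_density 0 (1 - u) x * x ^ 0) \<partial>lborel)"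
    using u by (intro nn_integral_cong) (auto simp: exponential_density_def ennreal_mult'[symmetric] field_simps exp_add[symmetric] simp del: ennreal_mult')
  also have "\<dots> = ennreal (1 / (1 - u)) * (\<integral>\<^sup>+x. ennreal (erlang_density 0 (1 - u) x * x ^ 0) \<partial>lborel)"
    by (rule nn_integral_cmult) auto
  also have "\<dots> = ennreal (1 / (1 - u))"
    using u by (subst nn_integral_erlang_ith_moment) auto
  finally show "(\<integral>\<^sup>+ \<omega>. ennreal (exp (u * X \<omega>)) \<partial>M) = ennreal (1 / (1 - u))" .
qed

lemma (in prob_space) mgf_sum:
  fixes X :: "nat \<Rightarrow> 'a \<Rightarrow> real" and l :: "nat \<Rightarrow> real"
  assumes indep: "indep_vars (\<lambda>_. borel) X UNIV"
    and D: "\<And>i. distributed M lborel (X i) (exponential_density 1)"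
    and l: "\<And>i. l i > 0" and c: "\<And>i. i < k \<Longrightarrow> c < l i"
  shows "integrable M (\<lambda>\<omega>. exp (c * (\<Sum>i<k. X i \<omega> / l i)))"
    and "expectation (\<lambda>\<omega>. exp (c * (\<Sum>i<k. X i \<omega> / l i))) = (\<Prod>i<k. 1 / (1 - c / l i))"
proof -
  define g where "g i x = exp ((c / l i) * x)" for i x
  have eq: "exp (c * (\<Sum>i<k. X i \<omega> / l i)) = (\<Prod>i<k. g i (X i \<omega>))" for \<omega>
    by (simp add: g_def sum_distrib_left exp_sum)
  have gm: "g i \<in> borel_measurable borel" for i unfolding g_def by measurable
  have hb: "has_bochner_integral M (\<lambda>\<omega>. g i (X i \<omega>)) (1 / (1 - c / l i))" if "i < k" for i
    unfolding g_def using mgf_exp[OF D, of "c / l i"] c[OF that] l[of i] by simp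
  have int: "integrable M (\<lambda>\<omega>. g i (X i \<omega>))" if "i \<in> {..<k}" for i
    using hb[of i] that by (simp add: has_bochner_integral_iff)
  show "integrable M (\<lambda>\<omega>. exp (c * (\<Sum>i<k. X i \<omega> / l i)))"
    unfolding eq by (rule prod_expect(1)[OF indep _ gm int]) auto
  have "expectation (\<lambda>\<omega>. exp (c * (\<Sum>i<k. X i \<omega> / l i))) = (\<Prod>i<k. expectation (\<lambda>\<omega>. g i (X i \<omega>)))"
    unfolding eq by (rule prod_expect(2)[OF indep _ gm int]) auto
  also have "\<dots> = (\<Prod>i<k. 1 / (1 - c / l i))"
    using hb by (intro prod.cong) (auto intro: has_bochner_integral_integral_eq)
  finally show "expectation (\<lambda>\<omega>. exp (c * (\<Sum>i<k. X i \<omega> / l i))) = (\<Prod>i<k. 1 / (1 - c / l i))" .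
qed

lemma (in prob_space) chernoff:
  fixes Y :: "'a \<Rightarrow> real"
  assumes int: "integrable M (\<lambda>\<omega>. exp (c * Y \<omega>))"
    and S: "S \<in> sets M" and sub: "\<And>\<omega>. \<omega> \<in> S \<Longrightarrow> exp (c * t) \<le> exp (c * Y \<omega>)"
  shows "measure M S \<le> expectation (\<lambda>\<omega>. exp (c * Y \<omega>)) / exp (c * t)"
proof -
  have "S \<subseteq> {\<omega> \<in> space M. exp (c * t) \<le> exp (c * Y \<omega>)}"
    using sub sets.sets_into_space[OF S] by auto
  moreover have "{\<omega> \<in> space M. exp (c * t) \<le> exp (c * Y \<omega>)} \<in> sets M"
  proof -
    have fm: "(\<lambda>\<omega>. exp (c * Y \<omega>)) \<in> borel_measurable M" using int by auto
    have "(\<lambda>\<omega>. exp (c * Y \<omega>)) -` {exp (c * t)..} \<inter> space M \<in> sets M"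
      by (rule measurable_sets[OF fm]) auto
    moreover have "(\<lambda>\<omega>. exp (c * Y \<omega>)) -` {exp (c * t)..} \<inter> space M = {\<omega> \<in> space M. exp (c * t) \<le> exp (c * Y \<omega>)}"
      by auto
    ultimately show ?thesis by simp
  qed
  ultimately have "measure M S \<le> measure M {\<omega> \<in> space M. exp (c * t) \<le> exp (c * Y \<omega>)}"
    by (intro finite_measure_mono) auto
  also have "\<dots> \<le> expectation (\<lambda>\<omega>. exp (c * Y \<omega>)) / exp (c * t)"
    by (rule integral_Markov_inequality_measure[OF int, of "space M"]) auto
  finally show ?thesis .
qed



lemma (in prob_space) lower_part:
  fixes X :: "nat \<Rightarrow> 'a \<Rightarrow> real" and l :: "nat \<Rightarrow> real"
  assumes indep: "indep_vars (\<lambda>_. borel) X UNIV"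
    and D: "\<And>i. distributed M lborel (X i) (exponential_density 1)"
    and l: "\<And>i. l i > 0" and t: "t \<ge> 0" and k: "k \<ge> 1"
  shows "t ^ k / (\<Prod>i<k. real k + l i * t) * (\<Prod>i<k. l i)
              \<le> measure M {\<omega> \<in> space M. (\<Sum>i<k. X i \<omega> / l i) \<le> t}"
proof -
  have Xm[measurable]: "X i \<in> borel_measurable M" for i using distributed_measurable[OF D[of i]] by simp
  define a where "a i = l i * t / k" for i
  have a0: "a i \<ge> 0" for i using l[of i] t by (simp add: a_def)
  define E where "E = {\<omega> \<in> space M. \<forall>i<k. X i \<omega> \<le> a i}"
  define g :: "nat \<Rightarrow> real \<Rightarrow> real" where "g i x = indicator {..a i} x" for i x
  have gm: "g i \<in> borel_measurable borel" for i unfolding g_def by measurable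
  have gint: "integrable M (\<lambda>\<omega>. g i (X i \<omega>))" for i
    by (rule integrable_const_bound[where B=1]) (auto simp: g_def indicator_def)
  have gexp: "expectation (\<lambda>\<omega>. g i (X i \<omega>)) = 1 - exp (- a i)" for i
  proof -
    have "expectation (\<lambda>\<omega>. g i (X i \<omega>)) = expectation (indicator {\<omega> \<in> space M. X i \<omega> \<le> a i})"
      by (intro Bochner_Integration.integral_cong) (auto simp: g_def indicator_def)
    also have "\<dots> = prob {\<omega> \<in> space M. X i \<omega> \<le> a i}" by (simp add: Int_absorb2 subset_iff)
    also have "\<dots> = 1 - exp (- a i * 1)" by (rule exponential_distributedD_le[OF D a0]) simp
    finally show ?thesis by simp
  qed
  have "prob E = expectation (indicator E)" by (simp add: E_def Int_absorb2 subset_iff)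
  also have "\<dots> = expectation (\<lambda>\<omega>. \<Prod>i<k. g i (X i \<omega>))"
    by (intro Bochner_Integration.integral_cong) (auto simp: E_def g_def indicator_def)
  also have "\<dots> = (\<Prod>i<k. 1 - exp (- a i))"
    by (subst prod_expect(2)[OF indep _ gm gint]) (auto simp: gexp)
  finally have pE: "prob E = (\<Prod>i<k. 1 - exp (- a i))" .
  have "E \<subseteq> {\<omega> \<in> space M. (\<Sum>i<k. X i \<omega> / l i) \<le> t}"
  proof
    fix \<omega> assume w: "\<omega> \<in> E"
    have "(\<Sum>i<k. X i \<omega> / l i) \<le> (\<Sum>i<k. a i / l i)"
      using w l by (intro sum_mono divide_right_mono) (auto simp: E_def less_imp_le)
    also have "\<dots> = (\<Sum>i<k. t / k)" proof (intro sum.cong refl)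
      fix i have "l i \<noteq> 0" using l[of i] by simp
      then show "a i / l i = t / k" by (simp add: a_def)
    qed
    also have "\<dots> = t" using k by simp
    finally show "\<omega> \<in> {\<omega> \<in> space M. (\<Sum>i<k. X i \<omega> / l i) \<le> t}" using w by (auto simp: E_def)
  qed
  then have "prob E \<le> prob {\<omega> \<in> space M. (\<Sum>i<k. X i \<omega> / l i) \<le> t}"
    by (intro finite_measure_mono) auto
  have "t ^ k / (\<Prod>i<k. real k + l i * t) * (\<Prod>i<k. l i) = (\<Prod>i<k. a i / (1 + a i))"
  proof -
    have "(\<Prod>i<k. a i / (1 + a i)) = (\<Prod>i<k. (l i * t) / (real k + l i * t))"
      using k by (intro prod.cong) (auto simp: a_def field_simps)
    also have "\<dots> = (\<Prod>i<k. l i) * t ^ k / (\<Prod>i<k. real k + l i * t)"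
      by (simp add: prod_dividef prod.distrib)
    finally show ?thesis by simp
  qed
  also have "\<dots> \<le> (\<Prod>i<k. 1 - exp (- a i))"
    by (intro prod_mono) (auto intro: low_bound a0 simp: a0 add_nonneg_nonneg)
  also have "\<dots> = prob E" using pE by simp
  finally show ?thesis using \<open>prob E \<le> _\<close> by linarith
qed



lemma (in prob_space) upper_pos:
  fixes X :: "nat \<Rightarrow> 'a \<Rightarrow> real" and l :: "nat \<Rightarrow> real"
  assumes indep: "indep_vars (\<lambda>_. borel) X UNIV"
    and D: "\<And>i. distributed M lborel (X i) (exponential_density 1)"
    and l: "\<And>i. l i > 0" and t: "t > 0" and k: "k \<ge> 1"
  shows "measure M {\<omega> \<in> space M. (\<Sum>i<k. X i \<omega> / l i) \<le> t}
              \<le> (exp 1 * t / real k) ^ k * (\<Prod>i<k. l i)"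
proof -
  have Xm[measurable]: "X i \<in> borel_measurable M" for i using distributed_measurable[OF D[of i]] by simp
  define c where "c = - (real k / t)"
  have c0: "c \<le> 0" using t by (simp add: c_def)
  have cl: "\<And>i. i < k \<Longrightarrow> c < l i" using c0 l by (meson le_less_trans)
  have mg1: "integrable M (\<lambda>\<omega>. exp (c * (\<Sum>i<k. X i \<omega> / l i)))"
    by (rule mgf_sum(1)[OF indep D l]) (rule cl)
  have mg2: "expectation (\<lambda>\<omega>. exp (c * (\<Sum>i<k. X i \<omega> / l i))) = (\<Prod>i<k. 1 / (1 - c / l i))"
    by (rule mgf_sum(2)[OF indep D l]) (rule cl)
  have "measure M {\<omega> \<in> space M. (\<Sum>i<k. X i \<omega> / l i) \<le> t}
      \<le> expectation (\<lambda>\<omega>. exp (c * (\<Sum>i<k. X i \<omega> / l i))) / exp (c * t)"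
    by (rule chernoff[OF mg1]) (auto intro: mult_left_mono_neg c0)
  also have "\<dots> = (\<Prod>i<k. 1 / (1 - c / l i)) * exp 1 ^ k"
  proof -
    have ct: "c * t = - real k" using t by (simp add: c_def)
    have e: "exp (c * t) = inverse (exp 1 ^ k)" unfolding ct by (simp add: exp_minus exp_of_nat_mult[symmetric])
    show ?thesis apply (subst mg2) apply (subst e) apply (simp add: divide_inverse) done
  qed
  also have "\<dots> \<le> (\<Prod>i<k. t / k * l i) * exp 1 ^ k"
  proof (intro mult_right_mono prod_mono conjI)
    fix i assume "i \<in> {..<k}"
    have li: "l i > 0" by (rule l)
    have kk: "real k > 0" using k by simp
    have "1 / (1 - c / l i) = t * l i / (t * l i + k)"
      using li t by (simp add: c_def field_simps)
    also have "\<dots> \<le> t * l i / k"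
      using li t kk by (intro divide_left_mono) (auto intro!: mult_pos_pos add_pos_pos)
    finally show "1 / (1 - c / l i) \<le> t / k * l i" by simp
    show "0 \<le> 1 / (1 - c / l i)" using li c0
      by (simp add: divide_nonpos_pos)
  qed simp
  also have "\<dots> = (exp 1 * t / real k) ^ k * (\<Prod>i<k. l i)"
  proof -
    have "(\<Prod>i<k. t / k * l i) = (t / k) ^ k * (\<Prod>i<k. l i)"
      by (subst prod.distrib) simp
    moreover have "(exp 1 * t / real k) ^ k = exp 1 ^ k * (t / k) ^ k"
      by (simp add: power_mult_distrib[symmetric] mult_ac)
    ultimately show ?thesis by (simp only:) (simp add: mult_ac)
  qed
  finally show ?thesis .
qed

lemma (in prob_space) upper_part:
  fixes X :: "nat \<Rightarrow> 'a \<Rightarrow> real" and l :: "nat \<Rightarrow> real"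
  assumes indep: "indep_vars (\<lambda>_. borel) X UNIV"
    and D: "\<And>i. distributed M lborel (X i) (exponential_density 1)"
    and l: "\<And>i. l i > 0" and t: "t \<ge> 0" and k: "k \<ge> 1"
  shows "measure M {\<omega> \<in> space M. (\<Sum>i<k. X i \<omega> / l i) \<le> t}
              \<le> (exp 1 * t / real k) ^ k * (\<Prod>i<k. l i)"
proof (cases "t > 0")
  case True then show ?thesis using upper_pos[OF indep D l True k] by simp
next
  case False
  then have t0: "t = 0" using t by simp
  define m where "m = measure M {\<omega> \<in> space M. (\<Sum>i<k. X i \<omega> / l i) \<le> 0}"
  define C where "C = (exp 1 / real k) ^ k * (\<Prod>i<k. l i)"
  have "0 < prod l {..<k}" using l by (intro prod_pos) auto
  then have Cp: "C > 0" using k by (simp add: C_def)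
  have bnd: "m \<le> C * s ^ k" if s: "s > 0" for s
  proof -
    have "m \<le> measure M {\<omega> \<in> space M. (\<Sum>i<k. X i \<omega> / l i) \<le> s}"
      unfolding m_def
    proof (rule finite_measure_mono)
      show "{\<omega> \<in> space M. (\<Sum>i<k. X i \<omega> / l i) \<le> s} \<in> events"
      proof -
        have Xm[measurable]: "X i \<in> borel_measurable M" for i using distributed_measurable[OF D[of i]] by simp
        show ?thesis by measurable
      qed
    qed (use s in auto)
    also have "\<dots> \<le> (exp 1 * s / real k) ^ k * (\<Prod>i<k. l i)"
      by (rule upper_pos[OF indep D l s k])
    also have "\<dots> = C * s ^ k" by (simp add: C_def power_mult_distrib power_divide)
    finally show ?thesis .
  qed
  have "m \<le> 0"
  proof (rule ccontr)
    assume "\<not> m \<le> 0"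
    then have mp: "m > 0" by simp
    define s where "s = min 1 (m / (2 * C))"
    have sp: "s > 0" using mp Cp by (simp add: s_def)
    have "s ^ k \<le> s ^ 1" using k sp by (intro power_decreasing) (auto simp: s_def)
    then have "C * s ^ k \<le> C * s" using Cp by simp
    also have "\<dots> \<le> C * (m / (2 * C))" using Cp by (intro mult_left_mono) (auto simp: s_def)
    also have "\<dots> < m" using Cp mp by simp
    finally show False using bnd[OF sp] by simp
  qed
  then show ?thesis using t0 k by (simp add: m_def power_0_left)
qed



lemma (in prob_space) tail_part:
  fixes X :: "nat \<Rightarrow> 'a \<Rightarrow> real" and l :: "nat \<Rightarrow> real"
  assumes indep: "indep_vars (\<lambda>_. borel) X UNIV"
    and D: "\<And>i. distributed M lborel (X i) (exponential_density 1)"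
    and l: "\<And>i. l i > 0" and lam: "lam > 0" "\<And>i. l i \<ge> lam" and k: "k \<ge> 1"
    and t: "t \<ge> (\<Sum>i<k. 1 / l i)"
  shows "measure M {\<omega> \<in> space M. (\<Sum>i<k. X i \<omega> / l i) \<ge> t}
                 \<le> exp (- (lam * (t - (\<Sum>i<k. 1 / l i))^2 / (2 * t)))"
proof -
  have Xm[measurable]: "X i \<in> borel_measurable M" for i using distributed_measurable[OF D[of i]] by simp
  define L where "L = (\<Sum>i<k. 1 / l i)"
  have Lp: "L > 0" unfolding L_def using k l by (intro sum_pos) (auto simp: lessThan_empty_iff)
  have tp: "t > 0" using t Lp unfolding L_def by linarith
  define a where "a = 1 - L / t"
  have a0: "0 \<le> a" using t tp by (simp add: a_def L_def field_simps)
  have a1: "a < 1" using Lp tp by (simp add: a_def)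
  define c where "c = lam * a"
  have c0: "c \<ge> 0" using lam a0 by (simp add: c_def)
  define x where "x i = c / l i" for i
  have x0: "x i \<ge> 0" for i using c0 l[of i] by (simp add: x_def)
  have xa: "x i \<le> a" for i
  proof -
    have "c \<le> l i * a" unfolding c_def using lam(2)[of i] a0 by (intro mult_right_mono) auto
    then show ?thesis using l[of i] by (simp add: x_def field_simps)
  qed
  have x1: "x i < 1" for i using xa[of i] a1 by simp
  have cl: "\<And>i. i < k \<Longrightarrow> c < l i"
  proof -
    fix i show "c < l i" using x1[of i] l[of i] by (simp add: x_def field_simps)
  qed
  have mg1: "integrable M (\<lambda>\<omega>. exp (c * (\<Sum>i<k. X i \<omega> / l i)))"
    by (rule mgf_sum(1)[OF indep D l]) (rule cl)
  have mg2: "expectation (\<lambda>\<omega>. exp (c * (\<Sum>i<k. X i \<omega> / l i))) = (\<Prod>i<k. 1 / (1 - c / l i))"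
    by (rule mgf_sum(2)[OF indep D l]) (rule cl)
  have "measure M {\<omega> \<in> space M. (\<Sum>i<k. X i \<omega> / l i) \<ge> t}
      \<le> expectation (\<lambda>\<omega>. exp (c * (\<Sum>i<k. X i \<omega> / l i))) / exp (c * t)"
    by (rule chernoff[OF mg1]) (auto intro: mult_left_mono c0)
  also have "\<dots> = (\<Prod>i<k. 1 / (1 - x i)) / exp (c * t)"
    by (simp add: mg2 x_def)
  also have "\<dots> \<le> exp (\<Sum>i<k. x i + (x i)^2 / (2 * (1 - x i))) / exp (c * t)"
  proof (intro divide_right_mono)
    have "(\<Prod>i<k. 1 / (1 - x i)) \<le> (\<Prod>i<k. exp (x i + (x i)^2 / (2 * (1 - x i))))"
      by (intro prod_mono conjI inv_bound x0 x1) (use x1 in \<open>auto simp: less_imp_le\<close>)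
    then show "(\<Prod>i<k. 1 / (1 - x i)) \<le> exp (\<Sum>i<k. x i + (x i)^2 / (2 * (1 - x i)))"
      by (simp add: exp_sum)
  qed simp
  also have "\<dots> \<le> exp (\<Sum>i<k. x i * (1 + a / (2 * (1 - a)))) / exp (c * t)"
  proof (intro divide_right_mono exp_mono sum_mono)
    fix i
    have "x i / (1 - x i) \<le> a / (1 - a)"
      using x0[of i] xa[of i] a1 by (intro frac_le) auto
    then have "x i / 2 * (x i / (1 - x i)) \<le> x i / 2 * (a / (1 - a))"
      using x0[of i] by (intro mult_left_mono) auto
    then show "x i + (x i)^2 / (2 * (1 - x i)) \<le> x i * (1 + a / (2 * (1 - a)))"
      by (simp add: power2_eq_square algebra_simps)
  qed simp
  also have "(\<Sum>i<k. x i * (1 + a / (2 * (1 - a)))) = c * L * (1 + a / (2 * (1 - a)))"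
    by (simp add: x_def L_def sum_distrib_left sum_distrib_right)
  also have "exp (c * L * (1 + a / (2 * (1 - a)))) / exp (c * t) = exp (c * L * (1 + a / (2 * (1 - a))) - c * t)"
    by (simp add: exp_diff)
  also have "c * L * (1 + a / (2 * (1 - a))) - c * t = - (lam * (t - L)^2 / (2 * t))"
  proof -
    have L: "L = t * (1 - a)" using tp by (simp add: a_def)
    have "1 - a \<noteq> 0" using a1 by simp
    then show ?thesis unfolding c_def L using tp
      by (simp add: field_simps power2_eq_square)
  qed
  finally show ?thesis by (simp add: L_def)
qed


theorem lemma2p1:
  fixes M :: "'a measure" and X :: "nat \<Rightarrow> 'a \<Rightarrow> real" and l :: "nat \<Rightarrow> real"
  assumes "prob_space M"
    and "prob_space.indep_vars M (\<lambda>_. borel) X UNIV"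
    and "\<And>i. distributed M lborel (X i) (exponential_density 1)"
    and "\<And>i. l i > 0"
  shows "(\<forall>t::real. \<forall>k::nat. t \<ge> 0 \<and> k \<ge> 1 \<longrightarrow>
            t ^ k / (\<Prod>i<k. real k + l i * t) * (\<Prod>i<k. l i)
              \<le> measure M {\<omega> \<in> space M. (\<Sum>i<k. X i \<omega> / l i) \<le> t}
          \<and> measure M {\<omega> \<in> space M. (\<Sum>i<k. X i \<omega> / l i) \<le> t}
              \<le> (exp 1 * t / real k) ^ k * (\<Prod>i<k. l i))
       \<and> (\<forall>lam::real. \<forall>k::nat. lam > 0 \<and> (\<forall>i. l i \<ge> lam) \<and> k \<ge> 1 \<longrightarrow>
            (\<forall>t::real. t \<ge> (\<Sum>i<k. 1 / l i) \<longrightarrow>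
               measure M {\<omega> \<in> space M. (\<Sum>i<k. X i \<omega> / l i) \<ge> t}
                 \<le> exp (- (lam * (t - (\<Sum>i<k. 1 / l i))^2 / (2 * t)))))"
proof -
  interpret prob_space M by (rule assms(1))
  show ?thesis
  proof (intro conjI allI impI)
    fix t :: real and k :: nat assume tk: "t \<ge> 0 \<and> k \<ge> 1"
    show "t ^ k / (\<Prod>i<k. real k + l i * t) * (\<Prod>i<k. l i)
              \<le> measure M {\<omega> \<in> space M. (\<Sum>i<k. X i \<omega> / l i) \<le> t}"
      by (rule lower_part[OF assms(2) assms(3) assms(4)]) (use tk in auto)
    show "measure M {\<omega> \<in> space M. (\<Sum>i<k. X i \<omega> / l i) \<le> t}
              \<le> (exp 1 * t / real k) ^ k * (\<Prod>i<k. l i)"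
      by (rule upper_part[OF assms(2) assms(3) assms(4)]) (use tk in auto)
  next
    fix lam :: real and k :: nat and t :: real
    assume h: "lam > 0 \<and> (\<forall>i. l i \<ge> lam) \<and> k \<ge> 1" and t: "t \<ge> (\<Sum>i<k. 1 / l i)"
    show "measure M {\<omega> \<in> space M. (\<Sum>i<k. X i \<omega> / l i) \<ge> t}
                 \<le> exp (- (lam * (t - (\<Sum>i<k. 1 / l i))^2 / (2 * t)))"
      by (rule tail_part[OF assms(2) assms(3) assms(4)]) (use h t in auto)
  qed
qed

end
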